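(* Let $p$ be an integer such that $2p = q(q+1)$ for some integer $q$ with $q \neq 0$ and $q + 1 \neq 0$, and suppose $q$ cannot be written as $q_1(q_1+1)$ for an integer $q_1$. Then $3p^3$ is represented by the following two sums of three integer cubes: $$\{-p - 2p(1 + 1)\}^3 + \left\{p + 2p\left(1 + \frac{1}{2}\right)\right\}^3 + \left\{p + 2p\left(1 + \frac{1}{2}\right)\right\}^3 = 3p^3$$ and $$\left\{-p - 2p\left(q + \frac{1}{q}\right)\right\}^3 + \left\{p + 2p\left(q + \frac{1}{q+1}\right)\right\}^3 + \left\{p + 2p\left(\frac{1}{q} + \frac{q}{q+1}\right)\right\}^3 = 3p^3.$$ *)

theory Defs
  imports Complex_Main
begin

end

theory Submission
  imports Defs
begin

lemma cube_id:
  fixes p q :: int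
  assumes hp: "2 * p = q * (q + 1)"
  shows "(-p - 2*p*q - (q+1))^3 + (p + 2*p*q + q)^3 + (p + (q+1) + q^2)^3 = 3 * p^3"
proof -
  have a: "2*(-p - 2*p*q - (q+1)) = -(q*(q+1)) - 2*q*(q*(q+1)) - 2*(q+1)"
    using hp by (simp add: algebra_simps)
  have b: "2*(p + 2*p*q + q) = q*(q+1) + 2*q*(q*(q+1)) + 2*q"
    using hp by (simp add: algebra_simps)
  have c: "2*(p + (q+1) + q^2) = q*(q+1) + 2*(q+1) + 2*q^2"
    using hp by (simp add: algebra_simps)
  have "8*((-p - 2*p*q - (q+1))^3 + (p + 2*p*q + q)^3 + (p + (q+1) + q^2)^3)
      = (2*(-p - 2*p*q - (q+1)))^3 + (2*(p + 2*p*q + q))^3 + (2*(p + (q+1) + q^2))^3"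
    by algebra
  also have "\<dots> = 3 * (q*(q+1))^3" unfolding a b c by algebra
  also have "\<dots> = 8 * (3 * p^3)" unfolding hp[symmetric] by algebra
  finally show ?thesis by simp
qed

theorem lemma3p3:
  fixes p q :: int
  assumes hp: "2 * p = q * (q + 1)"
    and hq0: "q \<noteq> 0" and hq1: "q + 1 \<noteq> 0"
    and hnot: "\<not> (\<exists>q1::int. q = q1 * (q1 + 1))"
  defines "x1 \<equiv> - real_of_int p - 2 * real_of_int p * (1 + 1)"
    and "y1 \<equiv> real_of_int p + 2 * real_of_int p * (1 + 1 / 2)"
    and "z1 \<equiv> real_of_int p + 2 * real_of_int p * (1 + 1 / 2)"
    and "x2 \<equiv> - real_of_int p - 2 * real_of_int p * (real_of_int q + 1 / real_of_int q)"
    and "y2 \<equiv> real_of_int p + 2 * real_of_int p * (real_of_int q + 1 / (real_of_int q + 1))"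
    and "z2 \<equiv> real_of_int p + 2 * real_of_int p * (1 / real_of_int q + real_of_int q / (real_of_int q + 1))"
  shows "x1 \<in> \<int> \<and> y1 \<in> \<int> \<and> z1 \<in> \<int> \<and> x1 ^ 3 + y1 ^ 3 + z1 ^ 3 = 3 * real_of_int p ^ 3
       \<and> x2 \<in> \<int> \<and> y2 \<in> \<int> \<and> z2 \<in> \<int> \<and> x2 ^ 3 + y2 ^ 3 + z2 ^ 3 = 3 * real_of_int p ^ 3"
proof -
  have rp: "2 * real_of_int p = real_of_int q * (real_of_int q + 1)"
    using arg_cong[OF hp, of real_of_int] by simp
  have q0: "real_of_int q \<noteq> 0" using hq0 by simp
  have q1: "real_of_int q + 1 \<noteq> 0" using hq1 by (metis of_int_1 of_int_add of_int_eq_0_iff)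
  have e1: "x1 = of_int (-5*p)" unfolding x1_def by simp
  have e2: "y1 = of_int (4*p)" unfolding y1_def by simp
  have e3: "z1 = of_int (4*p)" unfolding z1_def by simp
  have d1: "2 * real_of_int p / real_of_int q = real_of_int q + 1" using rp q0 by (simp add: field_simps)
  have d2: "2 * real_of_int p / (real_of_int q + 1) = real_of_int q" using rp q1 by (simp add: field_simps)
  have f1: "x2 = of_int (-p - 2*p*q - (q+1))"
  proof -
    have "x2 = - real_of_int p - 2 * real_of_int p * real_of_int q - 2 * real_of_int p / real_of_int q"
      unfolding x2_def by (simp add: algebra_simps)
    then show ?thesis using d1 by simp
  qed
  have f2: "y2 = of_int (p + 2*p*q + q)"
  proof -
    have "y2 = real_of_int p + 2 * real_of_int p * real_of_int q + 2 * real_of_int p / (real_of_int q + 1)"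
      unfolding y2_def by (simp add: algebra_simps)
    then show ?thesis using d2 by simp
  qed
  have f3: "z2 = of_int (p + (q+1) + q^2)"
  proof -
    have "z2 = real_of_int p + 2 * real_of_int p / real_of_int q + (2 * real_of_int p / (real_of_int q + 1)) * real_of_int q"
      unfolding z2_def by (simp add: algebra_simps)
    then show ?thesis using d1 d2 by (simp add: power2_eq_square)
  qed
  have c2: "x2 ^ 3 + y2 ^ 3 + z2 ^ 3 = 3 * real_of_int p ^ 3"
    unfolding f1 f2 f3 using arg_cong[OF cube_id[OF hp], of real_of_int] by simp
  show ?thesis using c2 unfolding e1 e2 e3 f1 f2 f3 by (simp add: algebra_simps)
qed

end
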